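(* Write $v(m,n)=v^{11}(m,n)$. For every $m\in\mathbb Z_{>0}$ and $\nu\in\mathbb Z_{\ge 0}$, in $M_r$ we have $$v(m,m)\,v(-m,-m)^{\nu}\mathbf 1=2m^2\nu(r+2\nu-2)\,v(-m,-m)^{\nu-1}\mathbf 1$$ (for $\nu=0$ both sides are $0$).
   Context: Fix an integer $d\ge 2$ and $r\in\mathbb{C}$. Let $\hat{\mathfrak h}$ be the complex Lie algebra with basis $\{v^i(m)\mid 1\le i\le d,\ m\in\mathbb{Z}\}\cup\{\mathbf c\}$ and bracket $[v^i(m),v^j(n)]=\delta_{m+n,0}\delta_{i,j}\,m\,\mathbf c$, $[\mathbf c,\hat{\mathfrak h}]=0$. In $A=U(\hat{\mathfrak h})/\langle \mathbf c-1\rangle$ let $v^{ij}(m,n)$ be the image of $v^i(m)v^j(n)$; then $v^{ij}(m,n)=v^{ji}(n,m)$ unless $i=j$ and $m=-n$, and $v^{ii}(m,-m)=v^{ii}(-m,m)+m$. Let $\mathcal B=\{v^{ii}(m,n)\mid 1\le i\le d,\ m\le n\}\cup\{v^{ij}(m,n)\mid 1\le i<j\le d,\ m,n\in\mathbb Z\}$; then $\mathcal B\cup\{1\}$ is linearly independent, $\mathcal L:=\mathrm{span}_{\mathbb C}\mathcal B\oplus\mathbb C\subset A$ contains every $v^{ij}(m,n)$ and is closed under $[x,y]=xy-yx$. With $\pi_1,\pi_2$ the projections of $\mathcal L$ onto $\mathrm{span}\,\mathcal B$ and onto $\mathbb C$, $[x,y]_r=\pi_1([x,y])+r\pi_2([x,y])$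 is a Lie bracket on $\mathcal L$; call this Lie algebra $\mathcal L_r$. Let $\mathcal B_+=\{v^{ij}(m,n)\in\mathcal B\mid m\ge 0\text{ or }n\ge 0\}$, $\mathcal L_r^+=\mathrm{span}\,\mathcal B_+\oplus\mathbb C$, and $M_r=U(\mathcal L_r)\otimes_{U(\mathcal L_r^+)}\mathbb C\mathbf 1$, where $\mathcal B_+$ acts by $0$ on $\mathbf 1$ and $s\in\mathbb C\subset\mathcal L_r$ acts by the scalar $s$. *)

theory Defs
  imports Complex_Main
begin

text \<open>Generators of the Lie algebra L_r.  Vb i j m n stands for v^{ij}(m,n);
  Cst stands for the element 1 of the summand C of L_r (NOT the unit of the
  enveloping algebra).\<close>
datatype gen = Vb nat nat int int | Cst

definition inB :: "nat \<Rightarrow> gen \<Rightarrow> bool" where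
  "inB d g = (case g of
      Vb i j m n \<Rightarrow> 1 \<le> i \<and> i \<le> d \<and> 1 \<le> j \<and> j \<le> d \<and> (i < j \<or> (i = j \<and> m \<le> n))
    | Cst \<Rightarrow> False)"

definition inL :: "nat \<Rightarrow> gen \<Rightarrow> bool" where
  "inL d g = (inB d g \<or> g = Cst)"

definition inBplus :: "nat \<Rightarrow> gen \<Rightarrow> bool" where
  "inBplus d g = (inB d g \<and> (case g of Vb i j m n \<Rightarrow> 0 \<le> m \<or> 0 \<le> n | Cst \<Rightarrow> False))"

definition single :: "gen \<Rightarrow> gen \<Rightarrow> complex" where
  "single g = (\<lambda>h. if h = g then 1 else 0)"

text \<open>Coordinates (w.r.t. B \<union> {1}) of the element v^{ij}(m,n) of A, using
  v^{ij}(m,n) = v^{ji}(n,m) unless i=j, m=-n, and v^{ii}(m,-m) = v^{ii}(-m,m) + m.\<close>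
definition vexp :: "nat \<Rightarrow> nat \<Rightarrow> int \<Rightarrow> int \<Rightarrow> gen \<Rightarrow> complex" where
  "vexp i j m n =
     (if i < j then single (Vb i j m n)
      else if j < i then single (Vb j i n m)
      else if m \<le> n then single (Vb i i m n)
      else if m = - n then (\<lambda>h. single (Vb i i n m) h + of_int m * single Cst h)
      else single (Vb i i n m))"

definition dl :: "nat \<Rightarrow> nat \<Rightarrow> int \<Rightarrow> complex" where
  "dl j k s = (if j = k \<and> s = 0 then 1 else 0)"

text \<open>Commutator [a,b] = ab - ba in A of two generators, in coordinates w.r.t.
  B \<union> {1} (the Cst-coordinate is the projection pi_2).  Derived from
  [v^i(m) v^j(n), v^k(p) v^l(q)] = [v^j(n),v^k(p)] v^{il}(m,q) + [v^j(n),v^l(q)] v^{ik}(m,p)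
    + [v^i(m),v^k(p)] v^{lj}(q,n) + [v^i(m),v^l(q)] v^{kj}(p,n).\<close>
definition bracketA :: "gen \<Rightarrow> gen \<Rightarrow> gen \<Rightarrow> complex" where
  "bracketA a b = (case a of Cst \<Rightarrow> (\<lambda>_. 0) | Vb i j m n \<Rightarrow>
     (case b of Cst \<Rightarrow> (\<lambda>_. 0) | Vb k l p q \<Rightarrow>
       (\<lambda>h. dl j k (n + p) * of_int n * vexp i l m q h
          + dl j l (n + q) * of_int n * vexp i k m p h
          + dl i k (m + p) * of_int m * vexp l j q n h
          + dl i l (m + q) * of_int m * vexp k j p n h)))"

definition bracket_r :: "complex \<Rightarrow> gen \<Rightarrow> gen \<Rightarrow> gen \<Rightarrow> complex" where
  "bracket_r r a b = (\<lambda>h. if h = Cst then r * bracketA a b h else bracketA a b h)"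

text \<open>Tensor algebra T(L_r): finitely supported functions on words of generators.\<close>
definition word :: "gen list \<Rightarrow> gen list \<Rightarrow> complex" where
  "word u = (\<lambda>z. if z = u then 1 else 0)"

definition lin :: "(gen \<Rightarrow> complex) \<Rightarrow> gen list \<Rightarrow> complex" where
  "lin x = (\<lambda>z. case z of [g] \<Rightarrow> x g | _ \<Rightarrow> 0)"

definition sand :: "gen list \<Rightarrow> (gen list \<Rightarrow> complex) \<Rightarrow> gen list \<Rightarrow> gen list \<Rightarrow> complex" where
  "sand u X w = (\<lambda>z. if \<exists>y. z = u @ y @ w then X (THE y. z = u @ y @ w) else 0)"

text \<open>Kernel of T(L_r) \<rightarrow> M_r = U(L_r) \<otimes>_{U(L_r^+)} C1, x \<mapsto> x 1:
  the two-sided ideal generated by ab - ba - [a,b]_r plus the left ideal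
  generated by B_+ and by (1_L - 1).\<close>
inductive_set Jr :: "nat \<Rightarrow> complex \<Rightarrow> (gen list \<Rightarrow> complex) set" for d :: nat and r :: complex where
  zero: "(\<lambda>_. 0) \<in> Jr d r"
| add: "X \<in> Jr d r \<Longrightarrow> Y \<in> Jr d r \<Longrightarrow> (\<lambda>z. X z + Y z) \<in> Jr d r"
| smult: "X \<in> Jr d r \<Longrightarrow> (\<lambda>z. c * X z) \<in> Jr d r"
| comm: "list_all (inL d) u \<Longrightarrow> list_all (inL d) w \<Longrightarrow> inL d a \<Longrightarrow> inL d b \<Longrightarrow>
     sand u (\<lambda>z. word [a, b] z - word [b, a] z - lin (bracket_r r a b) z) w \<in> Jr d r"
| ann: "list_all (inL d) u \<Longrightarrow> inBplus d b \<Longrightarrow> sand u (word [b]) [] \<in> Jr d r"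
| cent: "list_all (inL d) u \<Longrightarrow> sand u (\<lambda>z. word [Cst] z - word [] z) [] \<in> Jr d r"

text \<open>Equality in M_r of the images of X 1 and Y 1.\<close>
definition Mr_eq :: "nat \<Rightarrow> complex \<Rightarrow> (gen list \<Rightarrow> complex) \<Rightarrow> (gen list \<Rightarrow> complex) \<Rightarrow> bool" where
  "Mr_eq d r X Y \<longleftrightarrow> (\<lambda>z. X z - Y z) \<in> Jr d r"

end

theory Submission
  imports Defs
begin

lemma sand_at: "sand u X w (u @ y @ w) = X y"
  unfolding sand_def by (auto intro!: arg_cong[where f=X] the_equality)

lemma sand_off: "\<not> (\<exists>y. z = u @ y @ w) \<Longrightarrow> sand u X w z = 0"
  unfolding sand_def by auto

lemma sand_word: "sand u (word v) w = word (u @ v @ w)"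
proof
  fix z show "sand u (word v) w z = word (u @ v @ w) z"
    by (cases "\<exists>y. z = u @ y @ w") (auto simp: sand_at sand_off word_def split: if_splits)
qed

lemma sand_diff3: "sand u (\<lambda>z. A z - B z - C z) w z = sand u A w z - sand u B w z - sand u C w z"
  unfolding sand_def by auto

lemma sand_lin2: "sand u (\<lambda>y. c1 * A y + c2 * B y) w z = c1 * sand u A w z + c2 * sand u B w z"
  unfolding sand_def by auto

lemma lin2: "lin (\<lambda>h. c1 * single g1 h + c2 * single g2 h) = (\<lambda>y. c1 * word [g1] y + c2 * word [g2] y)"
proof
  fix y show "lin (\<lambda>h. c1 * single g1 h + c2 * single g2 h) y = c1 * word [g1] y + c2 * word [g2] y"
    by (cases y rule: remdups_adj.cases) (auto simp: lin_def single_def word_def)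
qed

lemma meq_zero: "X \<in> Jr d r \<Longrightarrow> (\<And>z. Y z = 0) \<Longrightarrow> Mr_eq d r X Y"
  unfolding Mr_eq_def by simp

lemma meq_step:
  assumes "Mr_eq d r X Z" "Mr_eq d r A A'" "\<And>z. Y z = Z z - c * A z + c * A' z"
  shows "Mr_eq d r X Y"
proof -
  have "(\<lambda>z. (X z - Z z) + (c * (A z - A' z))) \<in> Jr d r"
    using assms(1,2) unfolding Mr_eq_def by (intro Jr.add Jr.smult)
  moreover have "(\<lambda>z. (X z - Z z) + (c * (A z - A' z))) = (\<lambda>z. X z - Y z)"
    using assms(3) by (auto simp: algebra_simps)
  ultimately show ?thesis unfolding Mr_eq_def by simp
qed

lemma meq_fun: "Mr_eq d r X Y \<Longrightarrow> (\<And>z. Y z = Y' z) \<Longrightarrow> Mr_eq d r X Y'"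
  by (metis ext)

lemma comm_eq:
  assumes "list_all (inL d) u" "list_all (inL d) w" "inL d a" "inL d b"
    "bracket_r r a b = (\<lambda>h. c1 * single g1 h + c2 * single g2 h)"
  shows "Mr_eq d r (word (u @ a # b # w))
     (\<lambda>z. word (u @ b # a # w) z + c1 * word (u @ g1 # w) z + c2 * word (u @ g2 # w) z)"
proof -
  have "sand u (\<lambda>z. word [a, b] z - word [b, a] z - lin (bracket_r r a b) z) w \<in> Jr d r"
    using assms by (intro Jr.comm)
  moreover have "sand u (\<lambda>z. word [a, b] z - word [b, a] z - lin (bracket_r r a b) z) w
     = (\<lambda>z. word (u @ a # b # w) z - (word (u @ b # a # w) z + c1 * word (u @ g1 # w) z + c2 * word (u @ g2 # w) z))"
    apply (rule ext)
    apply (simp only: sand_diff3 assms(5) lin2 sand_lin2 sand_word)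
    apply (simp add: algebra_simps)
    done
  ultimately show ?thesis unfolding Mr_eq_def by simp
qed

lemma ann_eq: "list_all (inL d) u \<Longrightarrow> inBplus d b \<Longrightarrow> word (u @ [b]) \<in> Jr d r"
  using Jr.ann[of d u b r] by (simp add: sand_word)

lemma sand_diff2: "sand u (\<lambda>z. A z - B z) w z = sand u A w z - sand u B w z"
  unfolding sand_def by auto

lemma cent_eq: "list_all (inL d) u \<Longrightarrow> Mr_eq d r (word (u @ [Cst])) (word u)"
proof -
  assume u: "list_all (inL d) u"
  have "sand u (\<lambda>z. word [Cst] z - word [] z) [] = (\<lambda>z. word (u @ [Cst]) z - word u z)"
    by (rule ext) (simp only: sand_diff2 sand_word append_Nil2)
  thus ?thesis using Jr.cent[OF u, of r] unfolding Mr_eq_def by simp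
qed

lemma br_ab:
  assumes "0 < m"
  shows "bracket_r r (Vb 1 1 m m) (Vb 1 1 (- m) (- m))
    = (\<lambda>h. of_int (4 * m) * single (Vb 1 1 (- m) m) h + (2 * of_int m ^ 2 * r) * single Cst h)"
  using assms
  by (auto simp: fun_eq_iff bracket_r_def bracketA_def vexp_def dl_def single_def power2_eq_square algebra_simps)

lemma br_V0b:
  assumes "0 < m"
  shows "bracket_r r (Vb 1 1 (- m) m) (Vb 1 1 (- m) (- m))
    = (\<lambda>h. of_int (2 * m) * single (Vb 1 1 (- m) (- m)) h + 0 * single Cst h)"
  using assms
  by (auto simp: fun_eq_iff bracket_r_def bracketA_def vexp_def dl_def single_def algebra_simps)

lemma br_Cb:
  shows "bracket_r r Cst (Vb 1 1 (- m) (- m))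
    = (\<lambda>h. 0 * single (Vb 1 1 (- m) (- m)) h + 0 * single Cst h)"
  by (auto simp: fun_eq_iff bracket_r_def bracketA_def)

lemma inL_facts:
  assumes "1 \<le> d" "0 < m"
  shows "inL d (Vb 1 1 m m)" "inL d (Vb 1 1 (- m) (- m))" "inL d (Vb 1 1 (- m) m)" "inL d Cst"
    "inBplus d (Vb 1 1 m m)" "inBplus d (Vb 1 1 (- m) m)"
  using assms by (auto simp: inL_def inB_def inBplus_def)

lemma V0_pass:
  assumes "1 \<le> d" "0 < m"
  shows "list_all (inL d) u \<Longrightarrow> Mr_eq d r (word (u @ Vb 1 1 (- m) m # replicate j (Vb 1 1 (- m) (- m))))
     (\<lambda>z. of_int (2 * m) * of_nat j * word (u @ replicate j (Vb 1 1 (- m) (- m))) z)"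
proof (induction j arbitrary: u)
  case 0
  show ?case
    by (rule meq_zero) (use ann_eq[OF 0 inL_facts(6)[OF assms]] in auto)
next
  case (Suc j)
  let ?B = "Vb 1 1 (- m) (- m)"
  have u1: "list_all (inL d) (u @ [?B])" using Suc.prems inL_facts[OF assms] by simp
  have c: "Mr_eq d r (word (u @ Vb 1 1 (- m) m # ?B # replicate j ?B))
     (\<lambda>z. word (u @ ?B # Vb 1 1 (- m) m # replicate j ?B) z + of_int (2 * m) * word (u @ ?B # replicate j ?B) z
        + 0 * word (u @ Cst # replicate j ?B) z)"
    by (rule comm_eq[OF _ _ _ _ br_V0b[OF assms(2)]]) (use Suc.prems inL_facts[OF assms] in \<open>auto simp: list_all_iff\<close>)
  have ih: "Mr_eq d r (word (u @ ?B # Vb 1 1 (- m) m # replicate j ?B))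
     (\<lambda>z. of_int (2 * m) * of_nat j * word (u @ ?B # replicate j ?B) z)"
    using Suc.IH[OF u1] by simp
  show ?case unfolding replicate_Suc
    by (rule meq_step[OF c ih, where c=1]) (simp add: algebra_simps)
qed

lemma C_pass:
  assumes "1 \<le> d" "0 < m"
  shows "list_all (inL d) u \<Longrightarrow> Mr_eq d r (word (u @ Cst # replicate j (Vb 1 1 (- m) (- m))))
     (word (u @ replicate j (Vb 1 1 (- m) (- m))))"
proof (induction j arbitrary: u)
  case 0
  show ?case using cent_eq[OF 0] by simp
next
  case (Suc j)
  let ?B = "Vb 1 1 (- m) (- m)"
  have u1: "list_all (inL d) (u @ [?B])" using Suc.prems inL_facts[OF assms] by simp
  have c: "Mr_eq d r (word (u @ Cst # ?B # replicate j ?B))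
     (\<lambda>z. word (u @ ?B # Cst # replicate j ?B) z + 0 * word (u @ ?B # replicate j ?B) z
        + 0 * word (u @ Cst # replicate j ?B) z)"
    by (rule comm_eq[OF _ _ _ _ br_Cb]) (use Suc.prems inL_facts[OF assms] in \<open>auto simp: list_all_iff\<close>)
  have ih: "Mr_eq d r (word (u @ ?B # Cst # replicate j ?B)) (word (u @ ?B # replicate j ?B))"
    using Suc.IH[OF u1] by simp
  show ?case unfolding replicate_Suc
    by (rule meq_step[OF c ih, where c=1]) simp
qed

lemma main_pass:
  assumes "1 \<le> d" "0 < m"
  shows "list_all (inL d) u \<Longrightarrow> Mr_eq d r (word (u @ Vb 1 1 m m # replicate \<nu> (Vb 1 1 (- m) (- m))))
           (\<lambda>z. 2 * of_int m ^ 2 * of_nat \<nu> * (r + 2 * of_nat \<nu> - 2)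
                 * word (u @ replicate (\<nu> - 1) (Vb 1 1 (- m) (- m))) z)"
proof (induction \<nu> arbitrary: u)
  case 0
  show ?case
    by (rule meq_zero) (use ann_eq[OF 0 inL_facts(5)[OF assms]] in auto)
next
  case (Suc j)
  let ?B = "Vb 1 1 (- m) (- m)"
  let ?A = "Vb 1 1 m m"
  let ?V = "Vb 1 1 (- m) m"
  have u1: "list_all (inL d) (u @ [?B])" using Suc.prems inL_facts[OF assms] by simp
  have c: "Mr_eq d r (word (u @ ?A # ?B # replicate j ?B))
     (\<lambda>z. word (u @ ?B # ?A # replicate j ?B) z + of_int (4 * m) * word (u @ ?V # replicate j ?B) z
        + (2 * of_int m ^ 2 * r) * word (u @ Cst # replicate j ?B) z)"
    by (rule comm_eq[OF _ _ _ _ br_ab[OF assms(2)]]) (use Suc.prems inL_facts[OF assms] in \<open>auto simp: list_all_iff\<close>)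
  have ih: "Mr_eq d r (word (u @ ?B # ?A # replicate j ?B))
     (\<lambda>z. 2 * of_int m ^ 2 * of_nat j * (r + 2 * of_nat j - 2) * word (u @ ?B # replicate (j - 1) ?B) z)"
    using Suc.IH[OF u1] by simp
  have v: "Mr_eq d r (word (u @ ?V # replicate j ?B))
     (\<lambda>z. of_int (2 * m) * of_nat j * word (u @ replicate j ?B) z)"
    using V0_pass[OF assms Suc.prems] .
  have cc: "Mr_eq d r (word (u @ Cst # replicate j ?B)) (word (u @ replicate j ?B))"
    using C_pass[OF assms Suc.prems] .
  let ?K = "2 * of_int m ^ 2 * of_nat j * (r + 2 * of_nat j - 2) :: complex"
  let ?X = "word (u @ ?A # ?B # replicate j ?B)"
  have s1: "Mr_eq d r ?X (\<lambda>z. ?K * word (u @ ?B # replicate (j - 1) ?B) z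
      + of_int (4 * m) * word (u @ ?V # replicate j ?B) z + (2 * of_int m ^ 2 * r) * word (u @ Cst # replicate j ?B) z)"
    by (rule meq_step[OF c ih, where c=1]) (simp add: algebra_simps)
  have s2: "Mr_eq d r ?X (\<lambda>z. ?K * word (u @ ?B # replicate (j - 1) ?B) z
      + of_int (4 * m) * (of_int (2 * m) * of_nat j * word (u @ replicate j ?B) z) + (2 * of_int m ^ 2 * r) * word (u @ Cst # replicate j ?B) z)"
    by (rule meq_step[OF s1 v, where c="of_int (4 * m)"]) (simp add: algebra_simps)
  have s3: "Mr_eq d r ?X (\<lambda>z. ?K * word (u @ ?B # replicate (j - 1) ?B) z
      + of_int (4 * m) * (of_int (2 * m) * of_nat j * word (u @ replicate j ?B) z) + (2 * of_int m ^ 2 * r) * word (u @ replicate j ?B) z)"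
    by (rule meq_step[OF s2 cc, where c="2 * of_int m ^ 2 * r"]) (simp add: algebra_simps)
  show ?case unfolding replicate_Suc
  proof (rule meq_fun[OF s3])
    fix z
    show "?K * word (u @ ?B # replicate (j - 1) ?B) z
      + of_int (4 * m) * (of_int (2 * m) * of_nat j * word (u @ replicate j ?B) z) + (2 * of_int m ^ 2 * r) * word (u @ replicate j ?B) z
      = 2 * of_int m ^ 2 * of_nat (Suc j) * (r + 2 * of_nat (Suc j) - 2) * word (u @ replicate (Suc j - 1) ?B) z"
    proof (cases j)
      case 0 thus ?thesis by (simp add: algebra_simps)
    next
      case (Suc k)
      hence e: "?B # replicate (j - 1) ?B = replicate j ?B" by simp
      show ?thesis unfolding e by (simp add: algebra_simps power2_eq_square)
    qed
  qed
qed

theorem lemma5p3: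
  fixes d :: nat and r :: complex and m :: int and \<nu> :: nat
  assumes "2 \<le> d" and "0 < m"
  shows "Mr_eq d r
           (word (Vb 1 1 m m # replicate \<nu> (Vb 1 1 (- m) (- m))))
           (\<lambda>z. 2 * of_int m ^ 2 * of_nat \<nu> * (r + 2 * of_nat \<nu> - 2)
                 * word (replicate (\<nu> - 1) (Vb 1 1 (- m) (- m))) z)"
  using main_pass[of d m "[]" r \<nu>] assms by simp

end
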